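(* A matrix $Y\in\mathcal{H}^{n\times r}$ is a right canonical matrix for $T$ at $\lambda_0$ if and only if (i) $Y(\lambda_0)\in\mathbb{C}^{n\times r}$ has full column rank, and (ii) $TY\Delta^{-1}\doteq 0$, i.e. $TY\Delta^{-1}$ is holomorphic in a neighborhood of $\lambda_0$.
   Context: Let $\Omega\subset\mathbb{C}$ be open and $\lambda_0\in\Omega$ fixed. $\mathcal{H}$ denotes the ring of holomorphic functions on $\Omega$, and $\mathcal{H}_0$ the ring of functions holomorphic in some neighborhood of $\lambda_0$. Write $\chi_0(\lambda)=\lambda-\lambda_0$. For meromorphic matrices $M_1,M_2$ of equal size, $M_1\doteq M_2$ means that $M_2-M_1$ is holomorphic in a neighborhood of $\lambda_0$. Throughout, $T\in\mathcal{H}^{n\times n}$ with $\det T$ not identically zero and $\det T(\lambda_0)=0$, and $r=\dim\ker T(\lambda_0)$. There exist $U_L,U_R\in\mathcal{H}_0^{n\times n}$ with $U_L(\lambda_0),U_R(\lambda_0)$ nonsingular and uniquely determined integers $m_1\ge\cdots\ge m_n\ge 0$ (the partial multiplicities) with $U_LTU_R=\mathrm{diag}(\chi_0^{m_1},\dots,\chi_0^{m_n})$; $m_i>0$ exactly for $i\le r$. Set $\Delta=\mathrm{diag}(\chi_0^{m_1},\dots,\chi_0^{m_r})$. A root function for $T$ at $\lambda_0$ is $y\in\mathcal{H}^n$ with $y(\lambda_0)\neq0$ and $T(\lambda_0)y(\lambda_0)=0$; its multiplicity $\nu(y)$ is the order of the zero of $Ty$ at $\lambda_0$. A right canonical matrix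 for $T$ at $\lambda_0$ is $Y\in\mathcal{H}^{n\times r}$ whose columns $y_1,\dots,y_r$ are root functions such that (a) $y_1(\lambda_0),\dots,y_r(\lambda_0)$ are linearly independent, (b) $\sum_{i=1}^r\nu(y_i)=\sum_{i=1}^r m_i$, (c) $\nu(y_1)\ge\cdots\ge\nu(y_r)$. *)

theory Defs
  imports "HOL-Complex_Analysis.Complex_Analysis" "Jordan_Normal_Form.DL_Rank" "Jordan_Normal_Form.Matrix_Kernel"
begin

definition hol_mat :: "complex set \<Rightarrow> nat \<Rightarrow> nat \<Rightarrow> (complex \<Rightarrow> complex mat) \<Rightarrow> bool" where
  "hol_mat S m k A \<longleftrightarrow> (\<forall>z\<in>S. A z \<in> carrier_mat m k) \<and>
     (\<forall>i<m. \<forall>j<k. (\<lambda>z. A z $$ (i,j)) holomorphic_on S)"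

definition hol_vec :: "complex set \<Rightarrow> nat \<Rightarrow> (complex \<Rightarrow> complex vec) \<Rightarrow> bool" where
  "hol_vec S m y \<longleftrightarrow> (\<forall>z\<in>S. y z \<in> carrier_vec m) \<and> (\<forall>i<m. (\<lambda>z. y z $ i) holomorphic_on S)"

definition local_smith_form ::
  "nat \<Rightarrow> (complex \<Rightarrow> complex mat) \<Rightarrow> complex \<Rightarrow> (nat \<Rightarrow> nat) \<Rightarrow> bool" where
  "local_smith_form n T z0 m \<longleftrightarrow>
     (\<forall>i j. i \<le> j \<longrightarrow> j < n \<longrightarrow> m j \<le> m i) \<and>
     (\<exists>S UL UR. open S \<and> z0 \<in> S \<and> hol_mat S n n UL \<and> hol_mat S n n UR \<and>
        det (UL z0) \<noteq> 0 \<and> det (UR z0) \<noteq> 0 \<and>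
        (\<forall>z\<in>S. UL z * T z * UR z = mat n n (\<lambda>(i,j). if i = j then (z - z0) ^ m i else 0)))"

definition vec_zero_order :: "nat \<Rightarrow> (complex \<Rightarrow> complex vec) \<Rightarrow> complex \<Rightarrow> nat \<Rightarrow> bool" where
  "vec_zero_order n f z0 k \<longleftrightarrow>
     (\<exists>S g. open S \<and> z0 \<in> S \<and> hol_vec S n g \<and> g z0 \<noteq> 0\<^sub>v n \<and>
        (\<forall>z\<in>S. f z = (z - z0) ^ k \<cdot>\<^sub>v g z))"

definition root_mult :: "nat \<Rightarrow> (complex \<Rightarrow> complex mat) \<Rightarrow> complex \<Rightarrow> (complex \<Rightarrow> complex vec) \<Rightarrow> nat" where
  "root_mult n T z0 y = (THE k. vec_zero_order n (\<lambda>z. T z *\<^sub>v y z) z0 k)"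

definition root_function ::
  "complex set \<Rightarrow> nat \<Rightarrow> (complex \<Rightarrow> complex mat) \<Rightarrow> complex \<Rightarrow> (complex \<Rightarrow> complex vec) \<Rightarrow> bool" where
  "root_function \<Omega> n T z0 y \<longleftrightarrow> hol_vec \<Omega> n y \<and> y z0 \<noteq> 0\<^sub>v n \<and> T z0 *\<^sub>v y z0 = 0\<^sub>v n"

text \<open>Right canonical matrix (columns indexed 0..r-1); m are the partial multiplicities.\<close>
definition right_canonical ::
  "complex set \<Rightarrow> nat \<Rightarrow> (complex \<Rightarrow> complex mat) \<Rightarrow> complex \<Rightarrow> (nat \<Rightarrow> nat) \<Rightarrow> nat
     \<Rightarrow> (complex \<Rightarrow> complex mat) \<Rightarrow> bool" where
  "right_canonical \<Omega> n T z0 m r Y \<longleftrightarrow>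
     hol_mat \<Omega> n r Y \<and>
     (\<forall>j<r. root_function \<Omega> n T z0 (\<lambda>z. col (Y z) j)) \<and>
     distinct (cols (Y z0)) \<and> module.lin_indpt class_ring (module_vec TYPE(complex) n) (set (cols (Y z0))) \<and>
     (\<Sum>j<r. root_mult n T z0 (\<lambda>z. col (Y z) j)) = (\<Sum>j<r. m j) \<and>
     (\<forall>i j. i \<le> j \<longrightarrow> j < r \<longrightarrow> root_mult n T z0 (\<lambda>z. col (Y z) j) \<le> root_mult n T z0 (\<lambda>z. col (Y z) i))"

text \<open>T Y Delta^{-1} \<doteq> 0: the n x r meromorphic matrix with (i,j) entry (T Y)_{ij} / chi0^{m_j}
  agrees off z0 with a matrix holomorphic in a neighbourhood of z0.\<close>
definition TYDinv_hol :: "nat \<Rightarrow> (complex \<Rightarrow> complex mat) \<Rightarrow> complex \<Rightarrow> (nat \<Rightarrow> nat) \<Rightarrow> nat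
     \<Rightarrow> (complex \<Rightarrow> complex mat) \<Rightarrow> bool" where
  "TYDinv_hol n T z0 m r Y \<longleftrightarrow>
     (\<exists>S G. open S \<and> z0 \<in> S \<and> hol_mat S n r G \<and>
        (\<forall>z\<in>S - {z0}. \<forall>i<n. \<forall>j<r. (T z * Y z) $$ (i,j) / (z - z0) ^ m j = G z $$ (i,j)))"

end

theory Submission imports Defs begin

definition sdiv :: "complex \<Rightarrow> (complex \<Rightarrow> complex) \<Rightarrow> nat \<Rightarrow> bool" where
  "sdiv z0 f k \<longleftrightarrow> (\<exists>e>0. \<exists>g. g holomorphic_on ball z0 e \<and> (\<forall>z\<in>ball z0 e. f z = (z - z0)^k * g z))"

lemma sdiv_mono:
  assumes "sdiv z0 f k" "j \<le> k" shows "sdiv z0 f j"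
proof -
  obtain e g where e: "e>0" "g holomorphic_on ball z0 e" "\<forall>z\<in>ball z0 e. f z = (z - z0)^k * g z"
    using assms(1) unfolding sdiv_def by blast
  have "(\<lambda>z. (z-z0)^(k-j) * g z) holomorphic_on ball z0 e"
    by (intro holomorphic_intros e(2))
  moreover have "\<forall>z\<in>ball z0 e. f z = (z - z0)^j * ((z-z0)^(k-j) * g z)"
    using e(3) assms(2) by (simp add: power_add[symmetric] mult.assoc)
  ultimately show ?thesis using e(1) unfolding sdiv_def by blast
qed

lemma sdiv_zero:
  assumes "f holomorphic_on S" "open S" "z0 \<in> S" shows "sdiv z0 f 0"
proof -
  obtain e where "e>0" "ball z0 e \<subseteq> S" using assms openE by blast
  then show ?thesis unfolding sdiv_def using holomorphic_on_subset[OF assms(1)] by auto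
qed

lemma sdiv_cong:
  assumes "sdiv z0 f k" "e > 0" "\<forall>z\<in>ball z0 e. f z = h z" shows "sdiv z0 h k"
proof -
  obtain e' g where e: "e'>0" "g holomorphic_on ball z0 e'" "\<forall>z\<in>ball z0 e'. f z = (z - z0)^k * g z"
    using assms(1) unfolding sdiv_def by blast
  define d where "d = min e e'"
  have "d > 0" using e assms by (simp add: d_def)
  moreover have "g holomorphic_on ball z0 d" using e(2) by (rule holomorphic_on_subset) (auto simp: d_def)
  moreover have "\<forall>z\<in>ball z0 d. h z = (z - z0)^k * g z" using e(3) assms(3) by (auto simp: d_def) (metis dist_commute mem_ball)
  ultimately show ?thesis unfolding sdiv_def by blast
qed

lemma sdiv_add:
  assumes "sdiv z0 f k" "sdiv z0 h k" shows "sdiv z0 (\<lambda>z. f z + h z) k"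
proof -
  obtain e g where e: "e>0" "g holomorphic_on ball z0 e" "\<forall>z\<in>ball z0 e. f z = (z - z0)^k * g z"
    using assms(1) unfolding sdiv_def by blast
  obtain e' g' where e': "e'>0" "g' holomorphic_on ball z0 e'" "\<forall>z\<in>ball z0 e'. h z = (z - z0)^k * g' z"
    using assms(2) unfolding sdiv_def by blast
  define d where "d = min e e'"
  have "d > 0" using e e' by (simp add: d_def)
  moreover have "(\<lambda>z. g z + g' z) holomorphic_on ball z0 d"
    by (intro holomorphic_intros; rule holomorphic_on_subset, rule e(2) e'(2), auto simp: d_def)
  moreover have "\<forall>z\<in>ball z0 d. f z + h z = (z - z0)^k * (g z + g' z)" using e(3) e'(3)
    by (auto simp: d_def algebra_simps)
  ultimately show ?thesis unfolding sdiv_def by blast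
qed

lemma sdiv_mult:
  assumes "sdiv z0 f k" "h holomorphic_on S" "open S" "z0 \<in> S" shows "sdiv z0 (\<lambda>z. h z * f z) k"
proof -
  obtain e g where e: "e>0" "g holomorphic_on ball z0 e" "\<forall>z\<in>ball z0 e. f z = (z - z0)^k * g z"
    using assms(1) unfolding sdiv_def by blast
  obtain e' where e': "e'>0" "ball z0 e' \<subseteq> S" using assms openE by blast
  define d where "d = min e e'"
  have "d > 0" using e e' by (simp add: d_def)
  moreover have "(\<lambda>z. h z * g z) holomorphic_on ball z0 d"
    by (intro holomorphic_intros; rule holomorphic_on_subset, rule assms(2) e(2), insert e', auto simp: d_def)
  moreover have "\<forall>z\<in>ball z0 d. h z * f z = (z - z0)^k * (h z * g z)" using e(3)
    by (auto simp: d_def algebra_simps)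
  ultimately show ?thesis unfolding sdiv_def by blast
qed

lemma sdiv_sum:
  assumes "finite A" "\<And>i. i \<in> A \<Longrightarrow> sdiv z0 (f i) k"
  shows "sdiv z0 (\<lambda>z. \<Sum>i\<in>A. f i z) k"
  using assms
proof (induction A rule: finite_induct)
  case empty
  show ?case unfolding sdiv_def by (rule exI[of _ 1], auto intro!: exI[of _ "\<lambda>_. 0"])
next
  case (insert x F)
  then show ?case by (simp add: sdiv_add)
qed

lemma sdiv_val:
  assumes "sdiv z0 f k" "0 < k" shows "f z0 = 0"
  using assms unfolding sdiv_def by auto

lemma cont_agree:
  fixes f g :: "complex \<Rightarrow> complex"
  assumes "isCont f z0" "isCont g z0" "e > 0" "\<forall>z\<in>ball z0 e - {z0}. f z = g z"
  shows "f z0 = g z0"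
proof -
  have "eventually (\<lambda>z. f z = g z) (at z0)"
    unfolding eventually_at using assms(3,4) by (auto simp: dist_commute intro!: exI[of _ e])
  have 1: "(f \<longlongrightarrow> f z0) (at z0)" using assms(1) by (simp add: isCont_def)
  have 2: "(f \<longlongrightarrow> g z0) (at z0)" using assms(2) \<open>eventually _ _\<close>
    by (simp add: isCont_def) (rule tendsto_cong[THEN iffD2], auto simp: eventually_mono)
  show ?thesis using tendsto_unique[OF _ 1 2] by simp
qed

lemma hol_isCont: "f holomorphic_on S \<Longrightarrow> open S \<Longrightarrow> z \<in> S \<Longrightarrow> isCont f z"
  using continuous_on_eq_continuous_at holomorphic_on_imp_continuous_on by blast

lemma sdiv_cancel:
  assumes "g holomorphic_on S" "open S" "z0 \<in> S" "sdiv z0 (\<lambda>z. (z - z0)^a * g z) (a + b)"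
  shows "sdiv z0 g b"
proof -
  obtain e h where e: "e>0" "h holomorphic_on ball z0 e" "\<forall>z\<in>ball z0 e. (z - z0)^a * g z = (z - z0)^(a+b) * h z"
    using assms(4) unfolding sdiv_def by blast
  obtain e' where e': "e'>0" "ball z0 e' \<subseteq> S" using assms openE by blast
  define d where "d = min e e'"
  have d: "d > 0" using e e' by (simp add: d_def)
  have gh: "g z = (z - z0)^b * h z" if "z \<in> ball z0 d - {z0}" for z
  proof -
    have "(z - z0)^a * g z = (z - z0)^a * ((z - z0)^b * h z)"
      using e(3) that by (auto simp: d_def power_add mult.assoc)
    then show ?thesis using that by simp
  qed
  have hd: "h holomorphic_on ball z0 d" using e(2) by (rule holomorphic_on_subset) (auto simp: d_def)
  have c1: "isCont g z0" by (rule hol_isCont[OF assms(1-3)])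
  have c2: "isCont (\<lambda>z. (z - z0)^b * h z) z0"
    by (rule hol_isCont[of _ "ball z0 d"], intro holomorphic_intros hd, auto simp: d)
  have "g z0 = (z0 - z0)^b * h z0"
    using cont_agree[OF c1 c2 d] gh by auto
  then have "\<forall>z\<in>ball z0 d. g z = (z - z0)^b * h z" using gh by (metis DiffI singletonD)
  then show ?thesis using d hd unfolding sdiv_def by blast
qed

lemma sdiv_one:
  assumes "g holomorphic_on S" "open S" "z0 \<in> S" "g z0 = 0" shows "sdiv z0 g 1"
proof -
  obtain e where e: "e>0" "ball z0 e \<subseteq> S" using assms openE by blast
  define h where "h = (\<lambda>z. if z = z0 then deriv g z0 else (g z - g z0) / (z - z0))"
  have "h holomorphic_on S" unfolding h_def by (rule pole_lemma_open[OF assms(1,2)])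
  then have "h holomorphic_on ball z0 e" using e holomorphic_on_subset by blast
  moreover have "\<forall>z\<in>ball z0 e. g z = (z - z0)^1 * h z" using assms(4) by (auto simp: h_def)
  ultimately show ?thesis using e unfolding sdiv_def by blast
qed

lemma sdiv_step:
  assumes "e > 0" "g holomorphic_on ball z0 e" "\<forall>z\<in>ball z0 e. f z = (z - z0)^k * g z" "g z0 = 0"
  shows "sdiv z0 f (Suc k)"
proof -
  have "sdiv z0 g 1" by (rule sdiv_one[OF assms(2)]) (use assms in auto)
  then obtain e' h where e': "e'>0" "h holomorphic_on ball z0 e'" "\<forall>z\<in>ball z0 e'. g z = (z - z0)^1 * h z"
    unfolding sdiv_def by blast
  define d where "d = min e e'"
  have "d > 0" using e' assms by (simp add: d_def)
  moreover have "h holomorphic_on ball z0 d" using e'(2) by (rule holomorphic_on_subset) (auto simp: d_def)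
  moreover have "\<forall>z\<in>ball z0 d. f z = (z - z0)^(Suc k) * h z" using assms(3) e'(3) by (auto simp: d_def)
  ultimately show ?thesis unfolding sdiv_def by blast
qed


lemma sdiv_family:
  assumes "finite A" "\<forall>a\<in>A. sdiv z0 (f a) (k a)"
  shows "\<exists>e>0. \<exists>G. \<forall>a\<in>A. G a holomorphic_on ball z0 e \<and> (\<forall>z\<in>ball z0 e. f a z = (z - z0)^(k a) * G a z)"
  using assms
proof (induction A rule: finite_induct)
  case empty
  then show ?case by (auto intro: exI[of _ 1])
next
  case (insert x F)
  then obtain e G where e: "e>0" "\<forall>a\<in>F. G a holomorphic_on ball z0 e \<and> (\<forall>z\<in>ball z0 e. f a z = (z - z0)^(k a) * G a z)"
    by auto
  from insert obtain e' g where e': "e'>0" "g holomorphic_on ball z0 e'" "\<forall>z\<in>ball z0 e'. f x z = (z - z0)^(k x) * g z"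
    unfolding sdiv_def by auto
  define d where "d = min e e'"
  have "d > 0" using e e' by (simp add: d_def)
  moreover have "\<forall>a\<in>insert x F. (G(x:=g)) a holomorphic_on ball z0 d \<and> (\<forall>z\<in>ball z0 d. f a z = (z - z0)^(k a) * (G(x:=g)) a z)"
  proof
    fix a assume a: "a \<in> insert x F"
    show "(G(x:=g)) a holomorphic_on ball z0 d \<and> (\<forall>z\<in>ball z0 d. f a z = (z - z0)^(k a) * (G(x:=g)) a z)"
    proof (cases "a = x")
      case True
      then show ?thesis using e' holomorphic_on_subset[OF e'(2), of "ball z0 d"] by (auto simp: d_def)
    next
      case False
      then have "a \<in> F" using a by auto
      have "ball z0 d \<subseteq> ball z0 e" by (rule subset_ball) (simp add: d_def)
      then show ?thesis using e(2) \<open>a \<in> F\<close> holomorphic_on_subset[of "G a" "ball z0 e" "ball z0 d"] False by auto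
    qed
  qed
  ultimately show ?case by blast
qed

definition vdiv :: "complex \<Rightarrow> nat \<Rightarrow> (complex \<Rightarrow> complex vec) \<Rightarrow> nat \<Rightarrow> bool" where
  "vdiv z0 n F k \<longleftrightarrow> (\<forall>i<n. sdiv z0 (\<lambda>z. F z $ i) k)"

lemma vdiv_mono: "vdiv z0 n F k \<Longrightarrow> j \<le> k \<Longrightarrow> vdiv z0 n F j"
  unfolding vdiv_def using sdiv_mono by blast

lemma ord_char:
  assumes S: "open S" "z0 \<in> S" and F: "hol_vec S n F" and K: "\<not> vdiv z0 n F K"
  shows "vdiv z0 n F k \<longleftrightarrow> k \<le> (THE k. vec_zero_order n F z0 k)"
proof -
  define P where "P = {k. vdiv z0 n F k}"
  have PK: "P \<subseteq> {..<K}"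
  proof
    fix k assume "k \<in> P"
    then show "k \<in> {..<K}" using K vdiv_mono[of z0 n F k K] unfolding P_def by (cases "K \<le> k") auto
  qed
  then have finP: "finite P" using finite_subset by blast
  have P0: "0 \<in> P" unfolding P_def vdiv_def using sdiv_zero[OF _ S(1,2)] F unfolding hol_vec_def by auto
  define \<nu> where "\<nu> = Max P"
  have nuP: "vdiv z0 n F \<nu>" using Max_in[OF finP] P0 unfolding \<nu>_def P_def by auto
  have nu_max: "vdiv z0 n F k \<Longrightarrow> k \<le> \<nu>" for k using Max_ge[OF finP] unfolding \<nu>_def P_def by auto
  obtain eS where eS: "eS > 0" "ball z0 eS \<subseteq> S" using S openE by blast
  have vzo: "vec_zero_order n F z0 \<nu>"
  proof -
    obtain e G where e: "e>0" "\<forall>i\<in>{..<n}. G i holomorphic_on ball z0 e \<and> (\<forall>z\<in>ball z0 e. F z $ i = (z - z0)^\<nu> * G i z)"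
      using sdiv_family[of "{..<n}" z0 "\<lambda>i z. F z $ i" "\<lambda>_. \<nu>"] nuP unfolding vdiv_def by auto
    define d where "d = min e eS"
    have d: "d > 0" using e eS by (simp add: d_def)
    define Gv where "Gv = (\<lambda>z. vec n (\<lambda>i. G i z))"
    have hol: "hol_vec (ball z0 d) n Gv" unfolding hol_vec_def Gv_def
    proof (intro conjI allI impI ballI)
      fix i assume i: "i < n"
      have "ball z0 d \<subseteq> ball z0 e" by (rule subset_ball) (simp add: d_def)
      then have "G i holomorphic_on ball z0 d" using e(2) i holomorphic_on_subset[of "G i" "ball z0 e" "ball z0 d"] by auto
      then show "(\<lambda>z. vec n (\<lambda>i. G i z) $ i) holomorphic_on ball z0 d" using i by simp
    qed auto
    have nz: "Gv z0 \<noteq> 0\<^sub>v n"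
    proof -
      have "\<not> vdiv z0 n F (Suc \<nu>)" using nu_max by fastforce
      then obtain i where i: "i < n" "\<not> sdiv z0 (\<lambda>z. F z $ i) (Suc \<nu>)" unfolding vdiv_def by auto
      have "G i z0 \<noteq> 0"
      proof
        assume "G i z0 = 0"
        then have "sdiv z0 (\<lambda>z. F z $ i) (Suc \<nu>)" using sdiv_step[of e "G i" z0 "\<lambda>z. F z $ i" \<nu>] e i by auto
        then show False using i by auto
      qed
      then have "Gv z0 $ i \<noteq> 0\<^sub>v n $ i" using i unfolding Gv_def by simp
      then show ?thesis by metis
    qed
    have eq: "\<forall>z\<in>ball z0 d. F z = (z - z0)^\<nu> \<cdot>\<^sub>v Gv z"
    proof
      fix z assume z: "z \<in> ball z0 d"
      then have zS: "z \<in> S" using eS by (auto simp: d_def)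
      have dimF: "dim_vec (F z) = n" using F zS unfolding hol_vec_def by auto
      show "F z = (z - z0)^\<nu> \<cdot>\<^sub>v Gv z"
      proof (rule eq_vecI)
        fix i assume i: "i < dim_vec ((z - z0)^\<nu> \<cdot>\<^sub>v Gv z)"
        then have i': "i < n" by (simp add: Gv_def)
        have "z \<in> ball z0 e" using z by (auto simp: d_def)
        then show "F z $ i = ((z - z0)^\<nu> \<cdot>\<^sub>v Gv z) $ i" using e(2) i' by (simp add: Gv_def)
      qed (simp add: dimF Gv_def)
    qed
    show ?thesis unfolding vec_zero_order_def using d hol nz eq by (intro exI[of _ "ball z0 d"] exI[of _ Gv]) auto
  qed
  have uniq: "k' = \<nu>" if vz: "vec_zero_order n F z0 k'" for k'
  proof -
    obtain S' G' where S': "open S'" "z0 \<in> S'" "hol_vec S' n G'" "G' z0 \<noteq> 0\<^sub>v n"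
      "\<forall>z\<in>S'. F z = (z - z0) ^ k' \<cdot>\<^sub>v G' z"
      using vz unfolding vec_zero_order_def by blast
    obtain e' where e': "e' > 0" "ball z0 e' \<subseteq> S'" using S' openE by blast
    have comp: "F z $ i = (z - z0)^k' * G' z $ i" if "z \<in> S'" "i < n" for z i
    proof -
      have "G' z \<in> carrier_vec n" using S'(3) that(1) unfolding hol_vec_def by blast
      then have "dim_vec (G' z) = n" by simp
      then show ?thesis using S'(5) that by simp
    qed
    have "vdiv z0 n F k'" unfolding vdiv_def sdiv_def
    proof (intro allI impI)
      fix i assume i: "i < n"
      show "\<exists>e>0. \<exists>g. g holomorphic_on ball z0 e \<and> (\<forall>z\<in>ball z0 e. F z $ i = (z - z0) ^ k' * g z)"
        using e' i comp S'(3) holomorphic_on_subset[of "\<lambda>z. G' z $ i" S' "ball z0 e'"] unfolding hol_vec_def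
        by (intro exI[of _ e'] exI[of _ "\<lambda>z. G' z $ i"]) auto
    qed
    then have le: "k' \<le> \<nu>" by (rule nu_max)
    show ?thesis
    proof (rule ccontr)
      assume "k' \<noteq> \<nu>"
      then have "vdiv z0 n F (k' + 1)" using le vdiv_mono[OF nuP] by simp
      have "G' z0 $ i = 0" if i: "i < n" for i
      proof -
        have s: "sdiv z0 (\<lambda>z. F z $ i) (k' + 1)" using \<open>vdiv z0 n F (k' + 1)\<close> i unfolding vdiv_def by auto
        have "sdiv z0 (\<lambda>z. (z - z0)^k' * G' z $ i) (k' + 1)"
          by (rule sdiv_cong[OF s e'(1)]) (use e' comp i in auto)
        then have "sdiv z0 (\<lambda>z. G' z $ i) 1"
          by (rule sdiv_cancel[rotated 3]) (use S' i in \<open>auto simp: hol_vec_def\<close>)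
        then show ?thesis using sdiv_val by fastforce
      qed
      moreover have "dim_vec (G' z0) = n" using S'(2,3) unfolding hol_vec_def by auto
      ultimately have "G' z0 = 0\<^sub>v n" by (intro eq_vecI) auto
      then show False using S'(4) by simp
    qed
  qed
  have "(THE k. vec_zero_order n F z0 k) = \<nu>" using vzo uniq by (rule the_equality)
  then show ?thesis using nu_max vdiv_mono[OF nuP] by auto
qed


lemma hol_eq: "f holomorphic_on S \<Longrightarrow> (\<And>z. z \<in> S \<Longrightarrow> g z = f z) \<Longrightarrow> g holomorphic_on S"
  by (rule holomorphic_transform[of f S g]) auto

lemma mv_sum:
  assumes "A \<in> carrier_mat n k" "v \<in> carrier_vec k" "i < n"
  shows "(A *\<^sub>v v) $ i = (\<Sum>j<k. A $$ (i, j) * v $ j)"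
proof -
  have "(A *\<^sub>v v) $ i = row A i \<bullet> v" using assms by auto
  also have "\<dots> = (\<Sum>j\<in>{0..<k}. row A i $ j * v $ j)" using assms by (simp add: scalar_prod_def)
  also have "\<dots> = (\<Sum>j<k. A $$ (i, j) * v $ j)" using assms by (intro sum.cong) auto
  finally show ?thesis .
qed

lemma hol_det:
  assumes "hol_mat S n n A" shows "(\<lambda>z. det (A z)) holomorphic_on S"
proof -
  have "(\<lambda>z. \<Sum>p\<in>{p. p permutes {0..<n}}. signof p * (\<Prod>i=0..<n. A z $$ (i, p i))) holomorphic_on S"
  proof (intro holomorphic_intros)
    fix p i assume p: "p \<in> {p. p permutes {0..<n}}" and i: "i \<in> {0..<n}"
    then have "p i < n" using permutes_in_image by fastforce
    then show "(\<lambda>z. A z $$ (i, p i)) holomorphic_on S" using assms i unfolding hol_mat_def by auto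
  qed
  moreover have "det (A z) = (\<Sum>p\<in>{p. p permutes {0..<n}}. signof p * (\<Prod>i=0..<n. A z $$ (i, p i)))" if "z \<in> S" for z
    using assms that unfolding hol_mat_def det_def by auto
  ultimately show ?thesis by (rule hol_eq)
qed

lemma hol_mat_delete:
  assumes "hol_mat S n n A" shows "hol_mat S (n-1) (n-1) (\<lambda>z. mat_delete (A z) i j)"
  unfolding hol_mat_def
proof (intro conjI allI impI ballI)
  fix z assume "z \<in> S" then show "mat_delete (A z) i j \<in> carrier_mat (n - 1) (n - 1)"
    using assms mat_delete_carrier unfolding hol_mat_def by metis
next
  fix a b assume a: "a < n - 1" and b: "b < n - 1"
  have "(\<lambda>z. A z $$ (if a < i then a else Suc a, if b < j then b else Suc b)) holomorphic_on S"
    using assms a b unfolding hol_mat_def by auto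
  moreover have "mat_delete (A z) i j $$ (a, b) = A z $$ (if a < i then a else Suc a, if b < j then b else Suc b)"
    if "z \<in> S" for z
    using assms that a b unfolding hol_mat_def mat_delete_def by auto
  ultimately show "(\<lambda>z. mat_delete (A z) i j $$ (a, b)) holomorphic_on S" by (rule hol_eq)
qed

lemma hol_adj:
  assumes "hol_mat S n n A" shows "hol_mat S n n (\<lambda>z. adj_mat (A z))"
  unfolding hol_mat_def
proof (intro conjI allI impI ballI)
  fix z assume "z \<in> S" then show "adj_mat (A z) \<in> carrier_mat n n"
    using assms adj_mat(1) unfolding hol_mat_def by blast
next
  fix a b assume a: "a < n" and b: "b < n"
  have "(\<lambda>z. (-1)^(b+a) * det (mat_delete (A z) b a)) holomorphic_on S"
    by (intro holomorphic_intros hol_det[OF hol_mat_delete[OF assms]])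
  moreover have "adj_mat (A z) $$ (a, b) = (-1)^(b+a) * det (mat_delete (A z) b a)" if "z \<in> S" for z
    using assms that a b unfolding hol_mat_def adj_mat_def cofactor_def by auto
  ultimately show "(\<lambda>z. adj_mat (A z) $$ (a, b)) holomorphic_on S" by (rule hol_eq)
qed

lemma hol_mult_vec:
  assumes "hol_mat S n k A" "hol_vec S k v" shows "hol_vec S n (\<lambda>z. A z *\<^sub>v v z)"
  unfolding hol_vec_def
proof (intro conjI allI impI ballI)
  fix z assume "z \<in> S" then show "A z *\<^sub>v v z \<in> carrier_vec n"
    using assms unfolding hol_mat_def hol_vec_def by auto
next
  fix i assume i: "i < n"
  have "(\<lambda>z. \<Sum>j<k. A z $$ (i, j) * v z $ j) holomorphic_on S"
    using assms i unfolding hol_mat_def hol_vec_def by (intro holomorphic_intros) auto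
  moreover have "(A z *\<^sub>v v z) $ i = (\<Sum>j<k. A z $$ (i, j) * v z $ j)" if "z \<in> S" for z
    using assms that i unfolding hol_mat_def hol_vec_def
    by (intro mv_sum) auto
  ultimately show "(\<lambda>z. (A z *\<^sub>v v z) $ i) holomorphic_on S" by (rule hol_eq)
qed

lemma hol_col:
  assumes "hol_mat S n k Y" "j < k" shows "hol_vec S n (\<lambda>z. col (Y z) j)"
  unfolding hol_vec_def
proof (intro conjI allI impI ballI)
  fix z assume "z \<in> S" then show "col (Y z) j \<in> carrier_vec n"
    using assms unfolding hol_mat_def by auto
next
  fix i assume i: "i < n"
  have "(\<lambda>z. Y z $$ (i, j)) holomorphic_on S" using assms i unfolding hol_mat_def by auto
  moreover have "col (Y z) j $ i = Y z $$ (i, j)" if "z \<in> S" for z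
    using assms that i unfolding hol_mat_def by auto
  ultimately show "(\<lambda>z. col (Y z) j $ i) holomorphic_on S" by (rule hol_eq)
qed

lemma hol_smult_vec:
  assumes "f holomorphic_on S" "hol_vec S n v" shows "hol_vec S n (\<lambda>z. f z \<cdot>\<^sub>v v z)"
  unfolding hol_vec_def
proof (intro conjI allI impI ballI)
  fix z assume "z \<in> S" then show "f z \<cdot>\<^sub>v v z \<in> carrier_vec n"
    using assms unfolding hol_vec_def by auto
next
  fix i assume i: "i < n"
  have "(\<lambda>z. f z * v z $ i) holomorphic_on S" using assms i unfolding hol_vec_def by (auto intro!: holomorphic_intros)
  moreover have "(f z \<cdot>\<^sub>v v z) $ i = f z * v z $ i" if "z \<in> S" for z
    using assms that i unfolding hol_vec_def by auto
  ultimately show "(\<lambda>z. (f z \<cdot>\<^sub>v v z) $ i) holomorphic_on S" by (rule hol_eq)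
qed

lemma vdiv_mult_mat:
  assumes A: "hol_mat S n' n A" and S: "open S" "z0 \<in> S" and F: "\<forall>z\<in>S. F z \<in> carrier_vec n"
    and d: "vdiv z0 n F k"
  shows "vdiv z0 n' (\<lambda>z. A z *\<^sub>v F z) k"
  unfolding vdiv_def
proof (intro allI impI)
  fix i assume i: "i < n'"
  obtain e where e: "e > 0" "ball z0 e \<subseteq> S" using S openE by blast
  have "sdiv z0 (\<lambda>z. \<Sum>j<n. A z $$ (i, j) * F z $ j) k"
  proof (rule sdiv_sum)
    fix j assume j: "j \<in> {..<n}"
    show "sdiv z0 (\<lambda>z. A z $$ (i, j) * F z $ j) k"
      by (rule sdiv_mult[OF _ _ S]) (use d j A i in \<open>auto simp: vdiv_def hol_mat_def\<close>)
  qed simp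
  then show "sdiv z0 (\<lambda>z. (A z *\<^sub>v F z) $ i) k"
  proof (rule sdiv_cong[OF _ e(1)], intro ballI)
    fix z assume "z \<in> ball z0 e"
    then have z: "z \<in> S" using e by auto
    then show "(\<Sum>j<n. A z $$ (i, j) * F z $ j) = (A z *\<^sub>v F z) $ i"
      using A F i unfolding hol_mat_def by (intro mv_sum[symmetric]) auto
  qed
qed


lemma mult_unit_col:
  fixes A :: "complex mat"
  assumes A: "A \<in> carrier_mat nr nc" and i: "i < nc"
  shows "A *\<^sub>v unit_vec nc i = col A i"
proof (rule eq_vecI)
  fix a assume "a < dim_vec (col A i)"
  then have a: "a < nr" using A by auto
  have "(A *\<^sub>v unit_vec nc i) $ a = row A a \<bullet> unit_vec nc i" using A a by auto
  also have "\<dots> = row A a $ i" using i by simp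
  also have "\<dots> = col A i $ a" using A a i by auto
  finally show "(A *\<^sub>v unit_vec nc i) $ a = col A i $ a" .
qed (use A in auto)

lemma inj_distinct:
  fixes A :: "complex mat"
  assumes A: "A \<in> carrier_mat nr nc" and inj: "\<forall>x\<in>carrier_vec nc. A *\<^sub>v x = 0\<^sub>v nr \<longrightarrow> x = 0\<^sub>v nc"
  shows "distinct (cols A)"
proof (rule ccontr)
  assume "\<not> distinct (cols A)"
  then obtain i j where ij: "i < length (cols A)" "j < length (cols A)" "i \<noteq> j" "cols A ! i = cols A ! j"
    using distinct_conv_nth by blast
  then have ij': "i < nc" "j < nc" "col A i = col A j" using A by auto
  define x :: "complex vec" where "x = unit_vec nc i - unit_vec nc j"
  have xc: "x \<in> carrier_vec nc" unfolding x_def by auto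
  have "x $ i = 1" unfolding x_def using ij ij' by auto
  then have xnz: "x \<noteq> 0\<^sub>v nc" using ij' by auto
  have "A *\<^sub>v x = A *\<^sub>v unit_vec nc i - A *\<^sub>v unit_vec nc j"
    unfolding x_def by (rule mult_minus_distrib_mat_vec[OF A]) auto
  also have "\<dots> = col A i - col A j" using mult_unit_col[OF A] ij' by simp
  also have "\<dots> = 0\<^sub>v nr" using ij' A by auto
  finally show False using inj xc xnz by auto
qed

lemma inj_indpt:
  fixes A :: "complex mat"
  assumes A: "A \<in> carrier_mat nr nc" and inj: "\<forall>x\<in>carrier_vec nc. A *\<^sub>v x = 0\<^sub>v nr \<longrightarrow> x = 0\<^sub>v nc"
  shows "module.lin_indpt class_ring (module_vec TYPE(complex) nr) (set (cols A))"
proof -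
  interpret V: vec_space "TYPE(complex)" nr .
  have d: "distinct (cols A)" by (rule inj_distinct[OF A inj])
  show ?thesis
  proof (rule ccontr)
    assume "\<not> ?thesis"
    then have "V.lin_dep (set (cols A))" by simp
    then obtain v where "v \<in> carrier_vec nc" "v \<noteq> 0\<^sub>v nc" "A *\<^sub>v v = 0\<^sub>v nr"
      using V.lin_depE[OF A _ d] by metis
    then show False using inj by auto
  qed
qed

lemma indpt_inj:
  fixes A :: "complex mat"
  assumes A: "A \<in> carrier_mat nr nc" and d: "distinct (cols A)"
    and li: "module.lin_indpt class_ring (module_vec TYPE(complex) nr) (set (cols A))"
  shows "\<forall>x\<in>carrier_vec nc. A *\<^sub>v x = 0\<^sub>v nr \<longrightarrow> x = 0\<^sub>v nc"
proof (intro ballI impI)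
  interpret V: vec_space "TYPE(complex)" nr .
  fix x assume x: "x \<in> carrier_vec nc" "A *\<^sub>v x = 0\<^sub>v nr"
  show "x = 0\<^sub>v nc"
  proof (rule ccontr)
    assume "x \<noteq> 0\<^sub>v nc"
    then have "V.lin_dep (set (cols A))" using V.lin_depI[OF A x(1) _ x(2) d] by simp
    then show False using li by simp
  qed
qed

lemma inj_le:
  fixes A :: "complex mat"
  assumes A: "A \<in> carrier_mat nr nc" and inj: "\<forall>x\<in>carrier_vec nc. A *\<^sub>v x = 0\<^sub>v nr \<longrightarrow> x = 0\<^sub>v nc"
  shows "nc \<le> nr"
proof -
  interpret V: vec_space "TYPE(complex)" nr .
  have d: "distinct (cols A)" by (rule inj_distinct[OF A inj])
  have li: "V.lin_indpt (set (cols A))" using inj_indpt[OF A inj] by simp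
  have sub: "set (cols A) \<subseteq> carrier_vec nr" using A cols_dim by blast
  have "card (set (cols A)) \<le> V.dim" using V.li_le_dim(2)[OF V.fin_dim _ li] sub by simp
  moreover have "card (set (cols A)) = nc" using d A distinct_card by fastforce
  ultimately show ?thesis using V.dim_is_n by simp
qed

lemma rank_distinct:
  fixes A :: "complex mat"
  assumes A: "A \<in> carrier_mat nr nc" and rk: "vec_space.rank nr A = nc"
  shows "distinct (cols A)"
proof (rule ccontr)
  interpret V: vec_space "TYPE(complex)" nr .
  assume nd: "\<not> distinct (cols A)"
  obtain S where S: "maximal S (\<lambda>T. T \<subseteq> set (cols A) \<and> V.lin_indpt T)"
    using maximal_exists[of "(\<lambda>T. T \<subseteq> set (cols A) \<and> V.lin_indpt T)" "card (set (cols A))" "{}"]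
    by (meson List.finite_set card_mono empty_iff empty_subsetI V.finite_lin_indpt2 rev_finite_subset)
  then have "card S \<le> card (set (cols A))" by (simp add: card_mono maximal_def)
  moreover have "card (set (cols A)) < length (cols A)" using nd card_distinct nat_less_le card_length by metis
  ultimately have "card S < nc" using A by simp
  then show False using V.rank_card_indpt[OF A S] rk by simp
qed

lemma rank_inj:
  fixes A :: "complex mat"
  assumes A: "A \<in> carrier_mat nr nc" and rk: "vec_space.rank nr A = nc"
  shows "\<forall>x\<in>carrier_vec nc. A *\<^sub>v x = 0\<^sub>v nr \<longrightarrow> x = 0\<^sub>v nc"
proof -
  interpret V: vec_space "TYPE(complex)" nr .
  have d: "distinct (cols A)" by (rule rank_distinct[OF A rk])
  have "V.lin_indpt (set (cols A))" using V.full_rank_lin_indpt[OF A _ d] rk by simp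
  then show ?thesis using indpt_inj[OF A d] by simp
qed

lemma inj_rank:
  fixes A :: "complex mat"
  assumes A: "A \<in> carrier_mat nr nc" and inj: "\<forall>x\<in>carrier_vec nc. A *\<^sub>v x = 0\<^sub>v nr \<longrightarrow> x = 0\<^sub>v nc"
  shows "vec_space.rank nr A = nc"
proof -
  interpret V: vec_space "TYPE(complex)" nr .
  have d: "distinct (cols A)" by (rule inj_distinct[OF A inj])
  have li: "V.lin_indpt (set (cols A))" using inj_indpt[OF A inj] by simp
  show ?thesis using V.lin_indpt_full_rank[OF A d li] .
qed

lemma count_le:
  fixes W :: "complex mat"
  assumes W: "W \<in> carrier_mat n r" and inj: "\<forall>x\<in>carrier_vec r. W *\<^sub>v x = 0\<^sub>v n \<longrightarrow> x = 0\<^sub>v r"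
    and L: "L \<subseteq> {..<r}" and I: "I \<subseteq> {..<n}" and Z: "\<forall>l\<in>L. \<forall>i<n. i \<notin> I \<longrightarrow> W $$ (i, l) = 0"
  shows "card L \<le> card I"
proof -
  have finL: "finite L" using L finite_subset by blast
  have finI: "finite I" using I finite_subset by blast
  define ls where "ls = sorted_list_of_set L"
  define iis where "iis = sorted_list_of_set I"
  have ls: "distinct ls" "set ls = L" "length ls = card L" using finL by (auto simp: ls_def)
  have iis: "distinct iis" "set iis = I" "length iis = card I" using finI by (auto simp: iis_def)
  have bL: "bij_betw ((!) ls) {..<card L} L" using bij_betw_nth[OF ls(1)] ls by simp
  have bI: "bij_betw ((!) iis) {..<card I} I" using bij_betw_nth[OF iis(1)] iis by simp
  define M where "M = mat (card I) (card L) (\<lambda>(a,b). W $$ (iis!a, ls!b))"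
  have M: "M \<in> carrier_mat (card I) (card L)" unfolding M_def by simp
  have "\<forall>x\<in>carrier_vec (card L). M *\<^sub>v x = 0\<^sub>v (card I) \<longrightarrow> x = 0\<^sub>v (card L)"
  proof (intro ballI impI)
    fix x assume x: "x \<in> carrier_vec (card L)" and Mx: "M *\<^sub>v x = 0\<^sub>v (card I)"
    define ix where "ix = inv_into {..<card L} ((!) ls)"
    have ix1: "ix (ls ! b) = b" if "b < card L" for b
      unfolding ix_def using bij_betw_inv_into_left[OF bL] that by simp
    have ix2: "ls ! (ix l) = l" "ix l < card L" if "l \<in> L" for l
    proof -
      have "l \<in> (!) ls ` {..<card L}" using bL that by (auto simp: bij_betw_def)
      then show "ls ! (ix l) = l" "ix l < card L" unfolding ix_def
        using f_inv_into_f[of l "(!) ls"] inv_into_into[of l "(!) ls" "{..<card L}"] by auto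
    qed
    define x' where "x' = vec r (\<lambda>l. if l \<in> L then x $ (ix l) else 0)"
    have x'c: "x' \<in> carrier_vec r" unfolding x'_def by simp
    have key: "(W *\<^sub>v x') $ i = (\<Sum>b<card L. W $$ (i, ls!b) * x $ b)" if i: "i < n" for i
    proof -
      have "(W *\<^sub>v x') $ i = (\<Sum>l<r. W $$ (i,l) * x' $ l)" by (rule mv_sum[OF W x'c i])
      also have "\<dots> = (\<Sum>l\<in>L. W $$ (i,l) * x' $ l)"
        by (rule sum.mono_neutral_right) (use L in \<open>auto simp: x'_def\<close>)
      also have "\<dots> = (\<Sum>l\<in>L. W $$ (i,l) * x $ (ix l))"
        by (rule sum.cong) (use L in \<open>auto simp: x'_def\<close>)
      also have "\<dots> = (\<Sum>b<card L. W $$ (i, ls!b) * x $ (ix (ls ! b)))"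
        using sum.reindex_bij_betw[OF bL, of "\<lambda>l. W $$ (i,l) * x $ (ix l)"] by simp
      also have "\<dots> = (\<Sum>b<card L. W $$ (i, ls!b) * x $ b)" by (rule sum.cong) (auto simp: ix1)
      finally show ?thesis .
    qed
    have "W *\<^sub>v x' = 0\<^sub>v n"
    proof (rule eq_vecI)
      fix i assume "i < dim_vec (0\<^sub>v n)"
      then have i: "i < n" by simp
      show "(W *\<^sub>v x') $ i = 0\<^sub>v n $ i"
      proof (cases "i \<in> I")
        case True
        define a where "a = inv_into {..<card I} ((!) iis) i"
        have "i \<in> (!) iis ` {..<card I}" using bI True by (auto simp: bij_betw_def)
        then have a: "iis ! a = i" "a < card I" unfolding a_def
          using f_inv_into_f[of i "(!) iis"] inv_into_into[of i "(!) iis" "{..<card I}"] by auto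
        have "(M *\<^sub>v x) $ a = (\<Sum>b<card L. M $$ (a, b) * x $ b)" by (rule mv_sum[OF M x a(2)])
        also have "\<dots> = (\<Sum>b<card L. W $$ (i, ls!b) * x $ b)" by (rule sum.cong) (auto simp: M_def a)
        finally show ?thesis using key[OF i] Mx a i by simp
      next
        case False
        have "(\<Sum>b<card L. W $$ (i, ls!b) * x $ b) = 0"
        proof (rule sum.neutral, intro ballI)
          fix b assume "b \<in> {..<card L}"
          then have "ls ! b \<in> L" using bL by (auto simp: bij_betw_def)
          then show "W $$ (i, ls!b) * x $ b = 0" using Z False i by auto
        qed
        then show ?thesis using key[OF i] i by simp
      qed
    qed (use W in simp)
    then have x'0: "x' = 0\<^sub>v r" using inj x'c by auto
    show "x = 0\<^sub>v (card L)"
    proof (rule eq_vecI)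
      fix b assume "b < dim_vec (0\<^sub>v (card L))"
      then have b: "b < card L" by simp
      then have lb: "ls ! b \<in> L" using bL by (auto simp: bij_betw_def)
      then have "ls ! b < r" using L by auto
      then have "x' $ (ls ! b) = x $ b" using lb ix1[OF b] by (simp add: x'_def)
      then show "x $ b = 0\<^sub>v (card L) $ b" using x'0 \<open>ls ! b < r\<close> b by simp
    qed (use x in simp)
  qed
  then show ?thesis using inj_le[OF M] by simp
qed


lemma kernel_dim_zero_mat: "kernel.dim p (0\<^sub>m p p :: complex mat) = p"
proof -
  have c: "(0\<^sub>m p p :: complex mat) \<in> carrier_mat p p" by simp
  have "pivot_fun (0\<^sub>m p p :: complex mat) (\<lambda>_. p) p"
    by (rule pivot_funI) auto
  then have ref: "row_echelon_form (0\<^sub>m p p :: complex mat)" unfolding row_echelon_form_def by auto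
  have e: "{i. i < p \<and> row (0\<^sub>m p p :: complex mat) i \<noteq> 0\<^sub>v p} = {}" by auto
  show ?thesis using find_base_vectors(6)[OF ref c] unfolding e by simp
qed

lemma inv_exists:
  fixes A :: "complex mat"
  assumes A: "A \<in> carrier_mat n n" and d: "det A \<noteq> 0"
  obtains B where "B \<in> carrier_mat n n" "B * A = 1\<^sub>m n" "A * B = 1\<^sub>m n"
proof -
  from det_non_zero_imp_unit[OF A d, unfolded Units_def, of "()"]
  obtain B where "B \<in> carrier_mat n n" "B * A = 1\<^sub>m n" "A * B = 1\<^sub>m n"
    by (auto simp: ring_mat_def)
  then show ?thesis using that by blast
qed

lemma smith_kernel:
  assumes sm: "local_smith_form n T z0 m" and r: "r = kernel_dim (T z0)" and T0: "T z0 \<in> carrier_mat n n"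
  shows "r \<le> n" "\<forall>i<n. 0 < m i \<longleftrightarrow> i < r"
proof -
  have mono: "\<And>i j. i \<le> j \<Longrightarrow> j < n \<Longrightarrow> m j \<le> m i" using sm unfolding local_smith_form_def by simp
  have ex: "\<exists>S UL UR. open S \<and> z0 \<in> S \<and> hol_mat S n n UL \<and> hol_mat S n n UR \<and>
        det (UL z0) \<noteq> 0 \<and> det (UR z0) \<noteq> 0 \<and>
        (\<forall>z\<in>S. UL z * T z * UR z = mat n n (\<lambda>(i,j). if i = j then (z - z0) ^ m i else 0))"
    using sm unfolding local_smith_form_def by (rule conjunct2)
  obtain S UL UR where S: "open S" "z0 \<in> S" "hol_mat S n n UL" "hol_mat S n n UR"
    "det (UL z0) \<noteq> 0" "det (UR z0) \<noteq> 0"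
    "\<forall>z\<in>S. UL z * T z * UR z = mat n n (\<lambda>(i,j). if i = j then (z - z0) ^ m i else 0)"
    using ex by blast
  have UL0: "UL z0 \<in> carrier_mat n n" and UR0: "UR z0 \<in> carrier_mat n n" using S unfolding hol_mat_def by auto
  define p where "p = (LEAST i. n \<le> i \<or> m i = 0)"
  have p1: "n \<le> p \<or> m p = 0" unfolding p_def by (rule LeastI[of _ n]) simp
  have p2: "\<not> (n \<le> i \<or> m i = 0)" if "i < p" for i using not_less_Least[of i] that unfolding p_def by blast
  have pn: "p \<le> n" using p2[of n] by (cases "p \<le> n") auto
  have mpos: "0 < m i \<longleftrightarrow> i < p" if i: "i < n" for i
  proof
    assume "0 < m i"
    show "i < p"
    proof (rule ccontr)
      assume "\<not> i < p"
      then have "p < n" "m p = 0" using i p1 by auto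
      then have "m i \<le> m p" using mono[of p i] \<open>\<not> i < p\<close> i by simp
      then show False using \<open>0 < m i\<close> \<open>m p = 0\<close> by simp
    qed
  next
    assume "i < p" then show "0 < m i" using p2 by auto
  qed
  define D0 where "D0 = mat n n (\<lambda>(i,j). if i = j then (z0 - z0) ^ m i else (0::complex))"
  have D0eq: "UL z0 * T z0 * UR z0 = D0" using S unfolding D0_def by auto
  have D0c: "D0 \<in> carrier_mat n n" unfolding D0_def by simp
  have fb: "D0 = four_block_mat (0\<^sub>m p p) (0\<^sub>m p (n-p)) (0\<^sub>m (n-p) p) (1\<^sub>m (n-p))"
  proof (rule eq_matI)
    fix i j assume ij: "i < dim_row (four_block_mat (0\<^sub>m p p) (0\<^sub>m p (n-p)) (0\<^sub>m (n-p) p) (1\<^sub>m (n-p)))"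
      "j < dim_col (four_block_mat (0\<^sub>m p p) (0\<^sub>m p (n-p)) (0\<^sub>m (n-p) p) (1\<^sub>m (n-p) :: complex mat))"
    then have i: "i < n" and j: "j < n" using pn by auto
    show "D0 $$ (i, j) = four_block_mat (0\<^sub>m p p) (0\<^sub>m p (n-p)) (0\<^sub>m (n-p) p) (1\<^sub>m (n-p)) $$ (i, j)"
      using i j pn mpos[OF i] by (auto simp: D0_def)
  qed (use pn in \<open>auto simp: D0_def\<close>)
  have "kernel.dim (p + (n-p)) D0 = kernel.dim p (0\<^sub>m p p :: complex mat) + kernel.dim (n-p) (1\<^sub>m (n-p) :: complex mat)"
    by (rule kernel_four_block_0_mat[OF fb]) auto
  then have kD0: "kernel.dim n D0 = p" using pn kernel_dim_zero_mat kernel_one_mat(1) by simp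
  obtain B where B: "B \<in> carrier_mat n n" "B * UL z0 = 1\<^sub>m n" using inv_exists[OF UL0 S(5)] by blast
  obtain C where C: "C \<in> carrier_mat n n" "UR z0 * C = 1\<^sub>m n" using inv_exists[OF UR0 S(6)] by blast
  have "mat_kernel (UL z0 * (T z0 * UR z0)) = mat_kernel (T z0 * UR z0)"
    by (rule mat_kernel_mult_eq[OF _ UL0 B(1) B(2)]) (use T0 UR0 in auto)
  then have "kernel.dim n D0 = kernel.dim n (T z0 * UR z0)"
    using D0eq assoc_mult_mat[OF UL0 T0 UR0] by simp
  also have "\<dots> = kernel.dim n (T z0)" by (rule mat_kernel_dim_mult_eq_right[OF T0 UR0 C(1) C(2)])
  also have "\<dots> = kernel_dim (T z0)" unfolding kernel_dim_def using T0 by simp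
  finally have "r = p" using kD0 r by simp
  then show "r \<le> n" "\<forall>i<n. 0 < m i \<longleftrightarrow> i < r" using pn mpos by auto
qed


lemma sum_diag:
  fixes a :: complex and i n :: nat
  assumes "i < n" shows "(\<Sum>j<n. (if i = j then a else 0) * w j) = a * w i"
proof -
  have "(\<Sum>j<n. (if i = j then a else 0) * w j) = (\<Sum>j<n. if i = j then a * w j else 0)"
    by (rule sum.cong) auto
  also have "\<dots> = (\<Sum>j\<in>{..<n}. if j = i then a * w i else 0)" by (rule sum.cong) auto
  also have "\<dots> = a * w i" using assms by (subst sum.delta) auto
  finally show ?thesis .
qed

lemma smult_one_mv:
  fixes w :: "complex vec"
  assumes w: "w \<in> carrier_vec n" shows "(d \<cdot>\<^sub>m 1\<^sub>m n) *\<^sub>v w = d \<cdot>\<^sub>v w"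
proof (rule eq_vecI)
  fix i assume "i < dim_vec (d \<cdot>\<^sub>v w)"
  then have i: "i < n" using w by simp
  have "((d \<cdot>\<^sub>m 1\<^sub>m n) *\<^sub>v w) $ i = (\<Sum>j<n. (d \<cdot>\<^sub>m 1\<^sub>m n) $$ (i, j) * w $ j)"
    by (rule mv_sum[OF _ w i]) simp
  also have "\<dots> = (\<Sum>j<n. (if i = j then d else 0) * w $ j)" by (rule sum.cong) (use i in auto)
  also have "\<dots> = d * w $ i" by (rule sum_diag[OF i])
  finally show "((d \<cdot>\<^sub>m 1\<^sub>m n) *\<^sub>v w) $ i = (d \<cdot>\<^sub>v w) $ i" using i w by simp
qed (use w in simp)

locale smithctx =
  fixes n :: nat and T UL UR :: "complex \<Rightarrow> complex mat" and z0 :: complex and m :: "nat \<Rightarrow> nat" and e :: real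
  assumes e: "e > 0" and T: "hol_mat (ball z0 e) n n T" and UL: "hol_mat (ball z0 e) n n UL"
    and UR: "hol_mat (ball z0 e) n n UR" and dUR: "\<forall>z\<in>ball z0 e. det (UR z) \<noteq> 0"
    and eq: "\<forall>z\<in>ball z0 e. UL z * T z * UR z = mat n n (\<lambda>(i,j). if i = j then (z - z0)^m i else 0)"
begin

abbreviation "B \<equiv> ball z0 e"

definition Zf :: "(complex \<Rightarrow> complex vec) \<Rightarrow> complex \<Rightarrow> complex vec" where
  "Zf y = (\<lambda>z. (1 / det (UR z)) \<cdot>\<^sub>v (adj_mat (UR z) *\<^sub>v y z))"

lemma z0B: "z0 \<in> B" using e by simp

lemma Z_hol: assumes y: "hol_vec B n y" shows "hol_vec B n (Zf y)"
  unfolding Zf_def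
proof (rule hol_smult_vec)
  show "(\<lambda>z. 1 / det (UR z)) holomorphic_on B"
    using dUR by (intro holomorphic_intros hol_det[OF UR]) auto
  show "hol_vec B n (\<lambda>z. adj_mat (UR z) *\<^sub>v y z)" by (rule hol_mult_vec[OF hol_adj[OF UR] y])
qed

lemma Z_UR: assumes y: "hol_vec B n y" and z: "z \<in> B" shows "UR z *\<^sub>v Zf y z = y z"
proof -
  have U: "UR z \<in> carrier_mat n n" using UR z unfolding hol_mat_def by auto
  have yc: "y z \<in> carrier_vec n" using y z unfolding hol_vec_def by auto
  have d: "det (UR z) \<noteq> 0" using dUR z by auto
  have "UR z *\<^sub>v Zf y z = (1 / det (UR z)) \<cdot>\<^sub>v (UR z *\<^sub>v (adj_mat (UR z) *\<^sub>v y z))"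
    unfolding Zf_def by (rule mult_mat_vec[OF U]) (use adj_mat(1)[OF U] yc in auto)
  also have "UR z *\<^sub>v (adj_mat (UR z) *\<^sub>v y z) = (UR z * adj_mat (UR z)) *\<^sub>v y z"
    by (rule assoc_mult_mat_vec[symmetric, OF U adj_mat(1)[OF U] yc])
  also have "\<dots> = det (UR z) \<cdot>\<^sub>v y z" unfolding adj_mat(2)[OF U] by (rule smult_one_mv[OF yc])
  finally show ?thesis using d by (simp add: smult_smult_assoc)
qed

lemma Z_D: assumes y: "hol_vec B n y" and z: "z \<in> B" and i: "i < n"
  shows "(UL z *\<^sub>v (T z *\<^sub>v y z)) $ i = (z - z0)^m i * Zf y z $ i"
proof -
  have U: "UR z \<in> carrier_mat n n" "UL z \<in> carrier_mat n n" "T z \<in> carrier_mat n n"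
    using UR UL T z unfolding hol_mat_def by auto
  have Zc: "Zf y z \<in> carrier_vec n" using Z_hol[OF y] z unfolding hol_vec_def by auto
  have "UL z *\<^sub>v (T z *\<^sub>v y z) = UL z *\<^sub>v (T z *\<^sub>v (UR z *\<^sub>v Zf y z))" using Z_UR[OF y z] by simp
  also have "\<dots> = UL z *\<^sub>v ((T z * UR z) *\<^sub>v Zf y z)"
    using assoc_mult_mat_vec[of "T z" n n "UR z" n "Zf y z"] U Zc by simp
  also have "\<dots> = (UL z * (T z * UR z)) *\<^sub>v Zf y z"
    using assoc_mult_mat_vec[of "UL z" n n "T z * UR z" n "Zf y z"] U Zc by simp
  also have "\<dots> = (UL z * T z * UR z) *\<^sub>v Zf y z" using U by (simp add: assoc_mult_mat)
  also have "\<dots> = mat n n (\<lambda>(i,j). if i = j then (z - z0)^m i else 0) *\<^sub>v Zf y z" using eq z by simp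
  finally have "(UL z *\<^sub>v (T z *\<^sub>v y z)) $ i = (mat n n (\<lambda>(i,j). if i = j then (z - z0)^m i else 0) *\<^sub>v Zf y z) $ i"
    by simp
  also have "\<dots> = (\<Sum>j<n. mat n n (\<lambda>(i,j). if i = j then (z - z0)^m i else 0) $$ (i, j) * Zf y z $ j)"
    by (rule mv_sum[OF _ Zc i]) simp
  also have "\<dots> = (\<Sum>j<n. (if i = j then (z - z0)^m i else 0) * Zf y z $ j)" by (rule sum.cong) (use i in auto)
  also have "\<dots> = (z - z0)^m i * Zf y z $ i" by (rule sum_diag[OF i])
  finally show ?thesis .
qed

lemma key: assumes y: "hol_vec B n y" and d: "vdiv z0 n (\<lambda>z. T z *\<^sub>v y z) k" and i: "i < n" and mi: "m i < k"
  shows "Zf y z0 $ i = 0"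
proof -
  have "vdiv z0 n (\<lambda>z. UL z *\<^sub>v (T z *\<^sub>v y z)) k"
    by (rule vdiv_mult_mat[OF UL _ z0B _ d]) (use T y in \<open>auto simp: hol_mat_def hol_vec_def\<close>)
  then have s: "sdiv z0 (\<lambda>z. (UL z *\<^sub>v (T z *\<^sub>v y z)) $ i) k" using i unfolding vdiv_def by auto
  have "sdiv z0 (\<lambda>z. (z - z0)^m i * Zf y z $ i) (m i + (k - m i))"
    using sdiv_cong[OF s e] Z_D[OF y _ i] mi by auto
  then have "sdiv z0 (\<lambda>z. Zf y z $ i) (k - m i)"
    by (rule sdiv_cancel[rotated 3]) (use Z_hol[OF y] i z0B in \<open>auto simp: hol_vec_def\<close>)
  then show ?thesis using sdiv_val mi by fastforce
qed

lemma nontriv: assumes y: "hol_vec B n y" and y0: "y z0 \<noteq> 0\<^sub>v n"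
  shows "\<not> vdiv z0 n (\<lambda>z. T z *\<^sub>v y z) (Suc (\<Sum>i<n. m i))"
proof
  assume d: "vdiv z0 n (\<lambda>z. T z *\<^sub>v y z) (Suc (\<Sum>i<n. m i))"
  have Zc: "Zf y z0 \<in> carrier_vec n" using Z_hol[OF y] z0B unfolding hol_vec_def by auto
  have "Zf y z0 $ i = 0" if i: "i < n" for i
  proof (rule key[OF y d i])
    have "m i \<le> (\<Sum>i<n. m i)" using i by (intro member_le_sum) auto
    then show "m i < Suc (\<Sum>i<n. m i)" by simp
  qed
  then have "Zf y z0 = 0\<^sub>v n" using Zc by (intro eq_vecI) auto
  then have "y z0 = UR z0 *\<^sub>v 0\<^sub>v n" using Z_UR[OF y z0B] by simp
  also have "\<dots> = 0\<^sub>v n"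
  proof -
    have U: "UR z0 \<in> carrier_mat n n" using UR z0B unfolding hol_mat_def by auto
    show ?thesis by (rule eq_vecI) (use U in auto)
  qed
  finally show False using y0 by simp
qed

lemma F1: assumes y: "hol_vec B n y" and y0: "y z0 \<noteq> 0\<^sub>v n"
  shows "vdiv z0 n (\<lambda>z. T z *\<^sub>v y z) k \<longleftrightarrow> k \<le> root_mult n T z0 y"
  unfolding root_mult_def
  by (rule ord_char[OF _ z0B _ nontriv[OF y y0]]) (auto intro: hol_mult_vec[OF T y])

end


lemma hol_mat_subset: "hol_mat S n k A \<Longrightarrow> S' \<subseteq> S \<Longrightarrow> hol_mat S' n k A"
  unfolding hol_mat_def using holomorphic_on_subset by blast

lemma prod_entry:
  assumes "T \<in> carrier_mat n n" "Y \<in> carrier_mat n r" "i < n" "l < r"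
  shows "(T * Y) $$ (i, l) = (T *\<^sub>v col Y l) $ i"
  using assms by simp

context smithctx begin

lemma col_nz:
  fixes Y0 :: "complex mat"
  assumes Y0: "Y0 \<in> carrier_mat n r" and inj: "\<forall>x\<in>carrier_vec r. Y0 *\<^sub>v x = 0\<^sub>v n \<longrightarrow> x = 0\<^sub>v r" and l: "l < r"
  shows "col Y0 l \<noteq> 0\<^sub>v n"
proof
  assume "col Y0 l = 0\<^sub>v n"
  then have "Y0 *\<^sub>v unit_vec r l = 0\<^sub>v n" using mult_unit_col[OF Y0 l] by simp
  then have "unit_vec r l = (0\<^sub>v r :: complex vec)" using inj by auto
  then show False using l unit_vec_nonzero by metis
qed

lemma F2:
  assumes Y: "hol_mat B n r Y" and inj: "\<forall>x\<in>carrier_vec r. Y z0 *\<^sub>v x = 0\<^sub>v n \<longrightarrow> x = 0\<^sub>v r"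
  shows "card {l. l < r \<and> k \<le> root_mult n T z0 (\<lambda>z. col (Y z) l)} \<le> card {i. i < n \<and> k \<le> m i}"
proof -
  have Y0: "Y z0 \<in> carrier_mat n r" using Y z0B unfolding hol_mat_def by auto
  have U0: "UR z0 \<in> carrier_mat n n" using UR z0B unfolding hol_mat_def by auto
  have yl: "hol_vec B n (\<lambda>z. col (Y z) l)" if "l < r" for l by (rule hol_col[OF Y that])
  have ynz: "col (Y z0) l \<noteq> 0\<^sub>v n" if "l < r" for l by (rule col_nz[OF Y0 inj that])
  define W where "W = mat n r (\<lambda>(i,l). Zf (\<lambda>z. col (Y z) l) z0 $ i)"
  have Wc: "W \<in> carrier_mat n r" unfolding W_def by simp
  have colW: "col W l = Zf (\<lambda>z. col (Y z) l) z0" if l: "l < r" for l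
  proof -
    have Zc: "Zf (\<lambda>z. col (Y z) l) z0 \<in> carrier_vec n" using Z_hol[OF yl[OF l]] z0B unfolding hol_vec_def by auto
    show ?thesis
    proof (rule eq_vecI)
      show "dim_vec (col W l) = dim_vec (Zf (\<lambda>z. col (Y z) l) z0)" using Wc Zc by simp
      fix i assume "i < dim_vec (Zf (\<lambda>z. col (Y z) l) z0)"
      then have "i < n" using Zc by simp
      then show "col W l $ i = Zf (\<lambda>z. col (Y z) l) z0 $ i" using l by (simp add: W_def)
    qed
  qed
  have YW: "Y z0 = UR z0 * W"
  proof (rule eq_matI)
    fix i l assume i: "i < dim_row (UR z0 * W)" and l: "l < dim_col (UR z0 * W)"
    then have i': "i < n" and l': "l < r" using U0 Wc by auto
    have "(UR z0 * W) $$ (i, l) = (UR z0 *\<^sub>v col W l) $ i" using U0 Wc i' l' by simp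
    also have "\<dots> = col (Y z0) l $ i" using colW[OF l'] Z_UR[OF yl[OF l'] z0B] by simp
    also have "\<dots> = Y z0 $$ (i, l)" using Y0 i' l' by simp
    finally show "Y z0 $$ (i, l) = (UR z0 * W) $$ (i, l)" by simp
  qed (use U0 Wc Y0 in auto)
  have injW: "\<forall>x\<in>carrier_vec r. W *\<^sub>v x = 0\<^sub>v n \<longrightarrow> x = 0\<^sub>v r"
  proof (intro ballI impI)
    fix x :: "complex vec" assume x: "x \<in> carrier_vec r" "W *\<^sub>v x = 0\<^sub>v n"
    have "Y z0 *\<^sub>v x = UR z0 *\<^sub>v (W *\<^sub>v x)" unfolding YW using U0 Wc x by simp
    also have "\<dots> = 0\<^sub>v n" unfolding x(2) by (rule eq_vecI) (use U0 in auto)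
    finally show "x = 0\<^sub>v r" using inj x by auto
  qed
  show ?thesis
  proof (rule count_le[OF Wc injW])
    show "\<forall>l\<in>{l. l < r \<and> k \<le> root_mult n T z0 (\<lambda>z. col (Y z) l)}. \<forall>i<n. i \<notin> {i. i < n \<and> k \<le> m i} \<longrightarrow> W $$ (i, l) = 0"
    proof (intro ballI allI impI)
      fix l i assume l: "l \<in> {l. l < r \<and> k \<le> root_mult n T z0 (\<lambda>z. col (Y z) l)}" and i: "i < n"
        and ni: "i \<notin> {i. i < n \<and> k \<le> m i}"
      have lr: "l < r" using l by simp
      have "vdiv z0 n (\<lambda>z. T z *\<^sub>v col (Y z) l) k"
        using F1[OF yl[OF lr] ynz[OF lr]] l by simp
      then have "Zf (\<lambda>z. col (Y z) l) z0 $ i = 0" by (rule key[OF yl[OF lr] _ i]) (use ni i in auto)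
      then show "W $$ (i, l) = 0" using i lr by (simp add: W_def)
    qed
  qed auto
qed

end

lemma F3a:
  assumes S: "open \<Omega>" "z0 \<in> \<Omega>" and T: "hol_mat \<Omega> n n T" and Y: "hol_mat \<Omega> n r Y"
    and TY: "TYDinv_hol n T z0 m r Y" and l: "l < r"
  shows "vdiv z0 n (\<lambda>z. T z *\<^sub>v col (Y z) l) (m l)"
  unfolding vdiv_def
proof (intro allI impI)
  fix i assume i: "i < n"
  obtain S G where SG: "open S" "z0 \<in> S" "hol_mat S n r G"
    "\<forall>z\<in>S - {z0}. \<forall>i<n. \<forall>j<r. (T z * Y z) $$ (i,j) / (z - z0) ^ m j = G z $$ (i,j)"
    using TY unfolding TYDinv_hol_def by blast
  obtain e where e: "e > 0" "ball z0 e \<subseteq> S \<inter> \<Omega>" using SG S openE[of "S \<inter> \<Omega>" z0] by blast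
  have yl: "hol_vec \<Omega> n (\<lambda>z. col (Y z) l)" by (rule hol_col[OF Y l])
  have h1: "(\<lambda>z. (T z *\<^sub>v col (Y z) l) $ i) holomorphic_on \<Omega>"
    using hol_mult_vec[OF T yl] i unfolding hol_vec_def by auto
  have hG: "(\<lambda>z. G z $$ (i, l)) holomorphic_on S" using SG(3) i l unfolding hol_mat_def by auto
  have hG': "(\<lambda>z. G z $$ (i, l)) holomorphic_on ball z0 e" using hG e holomorphic_on_subset by blast
  have off: "(T z *\<^sub>v col (Y z) l) $ i = (z - z0)^m l * G z $$ (i, l)" if z: "z \<in> ball z0 e - {z0}" for z
  proof -
    have zS: "z \<in> S - {z0}" "z \<in> \<Omega>" using z e by auto
    have "(T z * Y z) $$ (i, l) / (z - z0) ^ m l = G z $$ (i, l)" using SG(4) zS(1) i l by blast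
    moreover have "(z - z0) ^ m l \<noteq> 0" using zS by simp
    moreover have "(T z * Y z) $$ (i, l) = (T z *\<^sub>v col (Y z) l) $ i"
      by (rule prod_entry) (use T Y zS i l in \<open>auto simp: hol_mat_def\<close>)
    ultimately show ?thesis by (simp add: field_simps)
  qed
  have c1: "isCont (\<lambda>z. (T z *\<^sub>v col (Y z) l) $ i) z0" by (rule hol_isCont[OF h1 S])
  have c2: "isCont (\<lambda>z. (z - z0)^m l * G z $$ (i, l)) z0"
    by (rule hol_isCont[of _ S]) (use hG SG in \<open>auto intro!: holomorphic_intros\<close>)
  have "(T z0 *\<^sub>v col (Y z0) l) $ i = (z0 - z0)^m l * G z0 $$ (i, l)"
    using cont_agree[OF c1 c2 e(1)] off by blast
  then have "\<forall>z\<in>ball z0 e. (T z *\<^sub>v col (Y z) l) $ i = (z - z0)^m l * G z $$ (i, l)"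
    using off by (metis DiffI singletonD)
  then show "sdiv z0 (\<lambda>z. (T z *\<^sub>v col (Y z) l) $ i) (m l)"
    unfolding sdiv_def using e(1) hG' by blast
qed

lemma F3b:
  assumes S: "open \<Omega>" "z0 \<in> \<Omega>" and T: "hol_mat \<Omega> n n T" and Y: "hol_mat \<Omega> n r Y"
    and d: "\<forall>l<r. vdiv z0 n (\<lambda>z. T z *\<^sub>v col (Y z) l) (m l)"
  shows "TYDinv_hol n T z0 m r Y"
proof -
  have "\<forall>a\<in>{..<n} \<times> {..<r}. sdiv z0 ((\<lambda>(i,l) z. (T z *\<^sub>v col (Y z) l) $ i) a) ((\<lambda>(i,l). m l) a)"
    using d unfolding vdiv_def by auto
  from sdiv_family[OF _ this] obtain e G where eG: "e > 0"
    "\<forall>a\<in>{..<n} \<times> {..<r}. G a holomorphic_on ball z0 e \<and>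
       (\<forall>z\<in>ball z0 e. (\<lambda>(i,l) z. (T z *\<^sub>v col (Y z) l) $ i) a z = (z - z0)^((\<lambda>(i,l). m l) a) * G a z)"
    by auto
  obtain e' where e': "e' > 0" "ball z0 e' \<subseteq> \<Omega>" using S openE by blast
  define d where "d = min e e'"
  have dpos: "d > 0" using eG e' by (simp add: d_def)
  have sub: "ball z0 d \<subseteq> ball z0 e" "ball z0 d \<subseteq> \<Omega>" using e' by (auto simp: d_def)
  define GM where "GM = (\<lambda>z. mat n r (\<lambda>(i,l). G (i,l) z))"
  have hol: "hol_mat (ball z0 d) n r GM" unfolding hol_mat_def
  proof (intro conjI allI impI ballI)
    fix i l assume il: "i < n" "l < r"
    have "G (i,l) holomorphic_on ball z0 d" using eG(2) il sub holomorphic_on_subset by blast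
    then show "(\<lambda>z. GM z $$ (i, l)) holomorphic_on ball z0 d" using il by (simp add: GM_def)
  qed (simp add: GM_def)
  have "\<forall>z\<in>ball z0 d - {z0}. \<forall>i<n. \<forall>j<r. (T z * Y z) $$ (i,j) / (z - z0) ^ m j = GM z $$ (i,j)"
  proof (intro ballI allI impI)
    fix z i j assume z: "z \<in> ball z0 d - {z0}" and i: "i < n" and j: "j < r"
    have zz: "z \<in> ball z0 e" "z \<in> \<Omega>" using z sub by auto
    have "(T z * Y z) $$ (i, j) = (T z *\<^sub>v col (Y z) j) $ i"
      by (rule prod_entry) (use T Y zz i j in \<open>auto simp: hol_mat_def\<close>)
    also have "\<dots> = (z - z0)^m j * G (i,j) z" using eG(2) i j zz by auto
    finally show "(T z * Y z) $$ (i,j) / (z - z0) ^ m j = GM z $$ (i,j)"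
      using z i j by (simp add: GM_def)
  qed
  then show ?thesis unfolding TYDinv_hol_def using dpos hol
    by (intro exI[of _ "ball z0 d"] exI[of _ GM]) auto
qed


theorem mainTheorem9:
  fixes \<Omega> :: "complex set" and z0 :: complex and n r :: nat
    and T Y :: "complex \<Rightarrow> complex mat" and m :: "nat \<Rightarrow> nat"
  assumes "open \<Omega>" and "z0 \<in> \<Omega>"
    and "hol_mat \<Omega> n n T"
    and "\<exists>z\<in>\<Omega>. det (T z) \<noteq> 0"
    and "det (T z0) = 0"
    and "r = kernel_dim (T z0)"
    and "local_smith_form n T z0 m"
    and "hol_mat \<Omega> n r Y"
  shows "right_canonical \<Omega> n T z0 m r Y \<longleftrightarrow>
           (vec_space.rank n (Y z0) = r \<and> TYDinv_hol n T z0 m r Y)"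
proof -
  note O = assms(1,2) and hT = assms(3) and r = assms(6) and sm = assms(7) and hY = assms(8)
  have T0: "T z0 \<in> carrier_mat n n" using hT O unfolding hol_mat_def by auto
  have Y0: "Y z0 \<in> carrier_mat n r" using hY O unfolding hol_mat_def by auto
  have rn: "r \<le> n" and mpos: "\<forall>i<n. 0 < m i \<longleftrightarrow> i < r" using smith_kernel[OF sm r T0] by auto
  have mono: "\<And>i j. i \<le> j \<Longrightarrow> j < n \<Longrightarrow> m j \<le> m i" using sm unfolding local_smith_form_def by simp
  have ex: "\<exists>S UL UR. open S \<and> z0 \<in> S \<and> hol_mat S n n UL \<and> hol_mat S n n UR \<and>
        det (UL z0) \<noteq> 0 \<and> det (UR z0) \<noteq> 0 \<and>
        (\<forall>z\<in>S. UL z * T z * UR z = mat n n (\<lambda>(i,j). if i = j then (z - z0) ^ m i else 0))"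
    using sm unfolding local_smith_form_def by (rule conjunct2)
  obtain S UL UR where S: "open S" "z0 \<in> S" "hol_mat S n n UL" "hol_mat S n n UR"
    "det (UL z0) \<noteq> 0" "det (UR z0) \<noteq> 0"
    "\<forall>z\<in>S. UL z * T z * UR z = mat n n (\<lambda>(i,j). if i = j then (z - z0) ^ m i else 0)"
    using ex by blast
  have "isCont (\<lambda>z. det (UR z)) z0" by (rule hol_isCont[OF hol_det[OF S(4)] S(1,2)])
  then obtain e1 where e1: "e1 > 0" "\<forall>y. dist z0 y < e1 \<longrightarrow> det (UR y) \<noteq> 0"
    using continuous_at_avoid[of z0 "\<lambda>z. det (UR z)" 0] S(6) by auto
  obtain e2 where e2: "e2 > 0" "ball z0 e2 \<subseteq> S \<inter> \<Omega>" using S O openE[of "S \<inter> \<Omega>" z0] by blast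
  define e where "e = min e1 e2"
  have eB: "ball z0 e \<subseteq> S" "ball z0 e \<subseteq> \<Omega>" using e2 by (auto simp: e_def)
  interpret ctx: smithctx n T UL UR z0 m e
  proof
    show "e > 0" using e1 e2 by (simp add: e_def)
    show "hol_mat (ball z0 e) n n T" by (rule hol_mat_subset[OF hT eB(2)])
    show "hol_mat (ball z0 e) n n UL" by (rule hol_mat_subset[OF S(3) eB(1)])
    show "hol_mat (ball z0 e) n n UR" by (rule hol_mat_subset[OF S(4) eB(1)])
    show "\<forall>z\<in>ball z0 e. det (UR z) \<noteq> 0" using e1 by (auto simp: e_def)
    show "\<forall>z\<in>ball z0 e. UL z * T z * UR z = mat n n (\<lambda>(i,j). if i = j then (z - z0) ^ m i else 0)"
      using S(7) eB(1) by blast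
  qed
  have hYB: "hol_mat (ball z0 e) n r Y" by (rule hol_mat_subset[OF hY eB(2)])
  define \<nu> where "\<nu> = (\<lambda>l. root_mult n T z0 (\<lambda>z. col (Y z) l))"
  have F1: "vdiv z0 n (\<lambda>z. T z *\<^sub>v col (Y z) l) k \<longleftrightarrow> k \<le> \<nu> l"
    if inj: "\<forall>x\<in>carrier_vec r. Y z0 *\<^sub>v x = 0\<^sub>v n \<longrightarrow> x = 0\<^sub>v r" and l: "l < r" for l k
    unfolding \<nu>_def by (rule ctx.F1[OF hol_col[OF hYB l] ctx.col_nz[OF Y0 inj l]])
  have F2: "card {l. l < r \<and> k \<le> \<nu> l} \<le> card {i. i < n \<and> k \<le> m i}"
    if inj: "\<forall>x\<in>carrier_vec r. Y z0 *\<^sub>v x = 0\<^sub>v n \<longrightarrow> x = 0\<^sub>v r" for k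
    unfolding \<nu>_def by (rule ctx.F2[OF hYB inj])
  show ?thesis
  proof
    assume rc: "right_canonical \<Omega> n T z0 m r Y"
    have d: "distinct (cols (Y z0))" and li: "module.lin_indpt class_ring (module_vec TYPE(complex) n) (set (cols (Y z0)))"
      and sumeq: "(\<Sum>j<r. \<nu> j) = (\<Sum>j<r. m j)"
      and sorted: "\<And>i j. i \<le> j \<Longrightarrow> j < r \<Longrightarrow> \<nu> j \<le> \<nu> i"
      using rc unfolding right_canonical_def \<nu>_def by auto
    have inj: "\<forall>x\<in>carrier_vec r. Y z0 *\<^sub>v x = 0\<^sub>v n \<longrightarrow> x = 0\<^sub>v r" by (rule indpt_inj[OF Y0 d li])
    have le: "\<nu> j \<le> m j" if j: "j < r" for j
    proof (rule ccontr)
      assume "\<not> \<nu> j \<le> m j"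
      then have lt: "m j < \<nu> j" by simp
      have "{..j} \<subseteq> {l. l < r \<and> \<nu> j \<le> \<nu> l}" using sorted j by auto
      then have c1: "Suc j \<le> card {l. l < r \<and> \<nu> j \<le> \<nu> l}" using card_mono[of "{l. l < r \<and> \<nu> j \<le> \<nu> l}" "{..j}"] by simp
      have "{i. i < n \<and> \<nu> j \<le> m i} \<subseteq> {..<j}"
      proof
        fix i assume i: "i \<in> {i. i < n \<and> \<nu> j \<le> m i}"
        show "i \<in> {..<j}"
        proof (rule ccontr)
          assume "i \<notin> {..<j}"
          then have "m i \<le> m j" using mono[of j i] i by simp
          then show False using i lt by simp
        qed
      qed
      then have c2: "card {i. i < n \<and> \<nu> j \<le> m i} \<le> j" using card_mono[of "{..<j}"] by fastforce
      show False using F2[OF inj, of "\<nu> j"] c1 c2 by simp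
    qed
    have eqs: "\<nu> j = m j" if j: "j < r" for j
    proof (rule ccontr)
      assume "\<nu> j \<noteq> m j"
      then have "\<nu> j < m j" using le[OF j] by simp
      then have "(\<Sum>j<r. \<nu> j) < (\<Sum>j<r. m j)"
        using le j by (intro sum_strict_mono_ex1) auto
      then show False using sumeq by simp
    qed
    have "TYDinv_hol n T z0 m r Y"
    proof (rule F3b[OF O hT hY], intro allI impI)
      fix l assume l: "l < r"
      show "vdiv z0 n (\<lambda>z. T z *\<^sub>v col (Y z) l) (m l)" using F1[OF inj l] eqs[OF l] by simp
    qed
    moreover have "vec_space.rank n (Y z0) = r" by (rule inj_rank[OF Y0 inj])
    ultimately show "vec_space.rank n (Y z0) = r \<and> TYDinv_hol n T z0 m r Y" by simp
  next
    assume "vec_space.rank n (Y z0) = r \<and> TYDinv_hol n T z0 m r Y"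
    then have rk: "vec_space.rank n (Y z0) = r" and TY: "TYDinv_hol n T z0 m r Y" by auto
    have inj: "\<forall>x\<in>carrier_vec r. Y z0 *\<^sub>v x = 0\<^sub>v n \<longrightarrow> x = 0\<^sub>v r" by (rule rank_inj[OF Y0 rk])
    have d: "distinct (cols (Y z0))" by (rule rank_distinct[OF Y0 rk])
    have li: "module.lin_indpt class_ring (module_vec TYPE(complex) n) (set (cols (Y z0)))"
      by (rule inj_indpt[OF Y0 inj])
    have vd: "vdiv z0 n (\<lambda>z. T z *\<^sub>v col (Y z) l) (m l)" if l: "l < r" for l
      by (rule F3a[OF O hT hY TY l])
    have ge: "m l \<le> \<nu> l" if l: "l < r" for l using F1[OF inj l] vd[OF l] by simp
    have eqs: "\<nu> j = m j" if j: "j < r" for j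
    proof (rule ccontr)
      assume "\<nu> j \<noteq> m j"
      then have lt: "m j < \<nu> j" using ge[OF j] by simp
      define k where "k = Suc (m j)"
      have sub: "{i. i < n \<and> k \<le> m i} \<subseteq> {l. l < r \<and> k \<le> \<nu> l}"
      proof
        fix i assume i: "i \<in> {i. i < n \<and> k \<le> m i}"
        then have "i < r" using mpos k_def by auto
        then show "i \<in> {l. l < r \<and> k \<le> \<nu> l}" using i ge[of i] by auto
      qed
      have "j \<in> {l. l < r \<and> k \<le> \<nu> l}" "j \<notin> {i. i < n \<and> k \<le> m i}" using j lt k_def by auto
      then have "{i. i < n \<and> k \<le> m i} \<subset> {l. l < r \<and> k \<le> \<nu> l}" using sub by blast
      then have "card {i. i < n \<and> k \<le> m i} < card {l. l < r \<and> k \<le> \<nu> l}"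
        by (rule psubset_card_mono[rotated]) simp
      then show False using F2[OF inj, of k] by simp
    qed
    have rf: "root_function \<Omega> n T z0 (\<lambda>z. col (Y z) l)" if l: "l < r" for l
      unfolding root_function_def
    proof (intro conjI)
      show "hol_vec \<Omega> n (\<lambda>z. col (Y z) l)" by (rule hol_col[OF hY l])
      show "col (Y z0) l \<noteq> 0\<^sub>v n" by (rule ctx.col_nz[OF Y0 inj l])
      have mp: "0 < m l" using mpos l rn by auto
      show "T z0 *\<^sub>v col (Y z0) l = 0\<^sub>v n"
      proof (rule eq_vecI)
        fix i assume "i < dim_vec (0\<^sub>v n :: complex vec)"
        then have i: "i < n" by simp
        have "sdiv z0 (\<lambda>z. (T z *\<^sub>v col (Y z) l) $ i) (m l)" using vd[OF l] i unfolding vdiv_def by auto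
        then show "(T z0 *\<^sub>v col (Y z0) l) $ i = 0\<^sub>v n $ i" using sdiv_val[OF _ mp] i by fastforce
      qed (use T0 in simp)
    qed
    show "right_canonical \<Omega> n T z0 m r Y"
      unfolding right_canonical_def
    proof (intro conjI allI impI)
      show "hol_mat \<Omega> n r Y" by (rule hY)
      show "\<And>j. j < r \<Longrightarrow> root_function \<Omega> n T z0 (\<lambda>z. col (Y z) j)" by (rule rf)
      show "distinct (cols (Y z0))" by (rule d)
      show "module.lin_indpt class_ring (module_vec TYPE(complex) n) (set (cols (Y z0)))" by (rule li)
      show "(\<Sum>j<r. root_mult n T z0 (\<lambda>z. col (Y z) j)) = (\<Sum>j<r. m j)"
        using eqs unfolding \<nu>_def by (intro sum.cong) auto
      fix i j assume ij: "i \<le> j" "j < r"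
      then show "root_mult n T z0 (\<lambda>z. col (Y z) j) \<le> root_mult n T z0 (\<lambda>z. col (Y z) i)"
        using eqs[of i] eqs[of j] mono[of i j] rn unfolding \<nu>_def by auto
    qed
  qed
qed

end
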